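(* For each $n\ge1$: for all integers $k,l\ge 0$, $\phi_n(k)\phi_n(l)=\phi_n(2kl+k+l)$; and for all integers $k,l\ge1$, $\phi^*_n(k)\phi^*_n(l)=\phi^*_n(2kl)$ and $\phi^+_n(k)\phi^+_n(l)=\phi^+_n(kl)$, where products are taken in the group algebra $\mathbb{Q}[S_n]$.
   Context: For $\pi\in S_n$, $\Omega_\pi(m),\Omega^*_\pi(m),\Omega^+_\pi(m)$ are defined as follows. Integers are written with $\bar i=-i$, ordered $0<_{\mathbb Z}\bar1<_{\mathbb Z}1<_{\mathbb Z}\bar2<_{\mathbb Z}2<\cdots$, $|\bar j|=j$; $a\prec_+b$ means $a<_{\mathbb Z}b$ or $a=b\in\{0,1,\ldots\}$; $a\prec_-b$ means $a<_{\mathbb Z}b$ or $a=b\in\{\bar1,\bar2,\ldots\}$. A $\pi$-partition is $f:[n]\to\mathbb Z$ with, for $1\le i<n$, $f(\pi(i))\prec_+f(\pi(i+1))$ if $\pi(i)<\pi(i+1)$ and $f(\pi(i))\prec_-f(\pi(i+1))$ if $\pi(i)>\pi(i+1)$. $\Omega_\pi(m)$ counts $\pi$-partitions with all $|f(i)|\le m$; $\Omega^*_\pi(m)$ those also never $0$; $\Omega^+_\pi(m)$ those with values in $\{1,\ldots,m\}$. Set $x_m(\pi)=\Omega_\pi(m)/(2m+1)^n$ (for $m\ge0$), $x^*_m(\pi)=\Omega^*_\pi(m)/(2m)^n$, $x^+_m(\pi)=\Omega^+_\pi(m)/m^n$ (for $m\ge1$); these are the probabilities of obtaining $\pi$ from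 an $m$-shelf shuffler in lazy, standard and strict mode respectively. Define $\phi_n(m)=\sum_{\pi\in S_n}x_m(\pi)\pi$, $\phi^*_n(m)=\sum_{\pi}x^*_m(\pi)\pi$, $\phi^+_n(m)=\sum_\pi x^+_m(\pi)\pi$, with multiplication in $\mathbb Q[S_n]$ induced by composition of permutations. *)

theory Defs
  imports Complex_Main "HOL-Combinatorics.Permutations" "HOL-Library.FuncSet"
begin

text \<open>Rank of an integer in the order 0 < -1 < 1 < -2 < 2 < ...\<close>
definition zrank :: "int \<Rightarrow> int" where
  "zrank a = (if a \<ge> 0 then 2 * a else 2 * (- a) - 1)"

definition zless :: "int \<Rightarrow> int \<Rightarrow> bool" where
  "zless a b \<longleftrightarrow> zrank a < zrank b"

definition prec_plus :: "int \<Rightarrow> int \<Rightarrow> bool" where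
  "prec_plus a b \<longleftrightarrow> zless a b \<or> (a = b \<and> a \<ge> 0)"

definition prec_minus :: "int \<Rightarrow> int \<Rightarrow> bool" where
  "prec_minus a b \<longleftrightarrow> zless a b \<or> (a = b \<and> a < 0)"

definition is_pi_partition :: "nat \<Rightarrow> (nat \<Rightarrow> nat) \<Rightarrow> (nat \<Rightarrow> int) \<Rightarrow> bool" where
  "is_pi_partition n \<pi> f \<longleftrightarrow>
     (\<forall>i. 1 \<le> i \<and> i < n \<longrightarrow>
        (\<pi> i < \<pi> (i+1) \<longrightarrow> prec_plus (f (\<pi> i)) (f (\<pi> (i+1)))) \<and>
        (\<pi> i > \<pi> (i+1) \<longrightarrow> prec_minus (f (\<pi> i)) (f (\<pi> (i+1)))))"

definition Omega :: "nat \<Rightarrow> (nat \<Rightarrow> nat) \<Rightarrow> nat \<Rightarrow> nat" where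
  "Omega n \<pi> m = card {f \<in> {1..n} \<rightarrow>\<^sub>E {- int m..int m}. is_pi_partition n \<pi> f}"

definition Omega_star :: "nat \<Rightarrow> (nat \<Rightarrow> nat) \<Rightarrow> nat \<Rightarrow> nat" where
  "Omega_star n \<pi> m = card {f \<in> {1..n} \<rightarrow>\<^sub>E ({- int m..int m} - {0}). is_pi_partition n \<pi> f}"

definition Omega_plus :: "nat \<Rightarrow> (nat \<Rightarrow> nat) \<Rightarrow> nat \<Rightarrow> nat" where
  "Omega_plus n \<pi> m = card {f \<in> {1..n} \<rightarrow>\<^sub>E {1..int m}. is_pi_partition n \<pi> f}"

text \<open>Elements of Q[S_n] as functions on permutations of {1..n} (zero elsewhere).\<close>
definition phi :: "nat \<Rightarrow> nat \<Rightarrow> (nat \<Rightarrow> nat) \<Rightarrow> rat" where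
  "phi n m \<pi> = (if \<pi> permutes {1..n} then of_nat (Omega n \<pi> m) / of_nat ((2*m+1)^n) else 0)"

definition phi_star :: "nat \<Rightarrow> nat \<Rightarrow> (nat \<Rightarrow> nat) \<Rightarrow> rat" where
  "phi_star n m \<pi> = (if \<pi> permutes {1..n} then of_nat (Omega_star n \<pi> m) / of_nat ((2*m)^n) else 0)"

definition phi_plus :: "nat \<Rightarrow> nat \<Rightarrow> (nat \<Rightarrow> nat) \<Rightarrow> rat" where
  "phi_plus n m \<pi> = (if \<pi> permutes {1..n} then of_nat (Omega_plus n \<pi> m) / of_nat (m^n) else 0)"

definition gmult :: "nat \<Rightarrow> ((nat \<Rightarrow> nat) \<Rightarrow> rat) \<Rightarrow> ((nat \<Rightarrow> nat) \<Rightarrow> rat) \<Rightarrow> (nat \<Rightarrow> nat) \<Rightarrow> rat" where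
  "gmult n a b \<sigma> = (\<Sum>\<pi>\<in>{p. p permutes {1..n}}. \<Sum>\<tau>\<in>{p. p permutes {1..n}}.
      (if \<pi> \<circ> \<tau> = \<sigma> then a \<pi> * b \<tau> else 0))"

end

theory Submission
  imports Defs "HOL-Library.Product_Lexorder"
begin

lemma zrank_nonneg: "0 \<le> zrank a"
  by (simp add: zrank_def)

lemma zrank_inj: "zrank a = zrank b \<longleftrightarrow> a = b"
  by (auto simp: zrank_def split: if_splits) presburger+

lemma even_zrank: "even (zrank a) \<longleftrightarrow> 0 \<le> a"
  by (auto simp: zrank_def)

definition zunrank :: "int \<Rightarrow> int" where
  "zunrank t = (if even t then t div 2 else - ((t + 1) div 2))"

lemma zrank_zunrank: "0 \<le> t \<Longrightarrow> zrank (zunrank t) = t"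
  by (auto simp: zrank_def zunrank_def) presburger+

lemma zunrank_nonneg_iff: "0 \<le> t \<Longrightarrow> 0 \<le> zunrank t \<longleftrightarrow> even t"
  by (metis even_zrank zrank_zunrank)

lemma zrank_range: "a \<in> {- int m..int m} \<longleftrightarrow> zrank a \<le> 2 * int m"
  by (auto simp: zrank_def)

lemma zrank_range_star: "a \<in> {- int m..int m} - {0} \<longleftrightarrow> 1 \<le> zrank a \<and> zrank a \<le> 2 * int m"
  by (auto simp: zrank_def)

definition key :: "(nat \<Rightarrow> int) \<Rightarrow> nat \<Rightarrow> int \<times> int" where
  "key f x = (zrank (f x), if 0 \<le> f x then int x else - int x)"

lemma key_inj: "x \<noteq> y \<Longrightarrow> key f x \<noteq> key f y"
  by (auto simp: key_def zrank_inj split: if_splits)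

lemma key_less: "key f x < key f y \<longleftrightarrow> zrank (f x) < zrank (f y) \<or>
   (f x = f y \<and> (0 \<le> f x \<and> x < y \<or> f x < 0 \<and> y < x))"
proof (cases "f x = f y")
  case True then show ?thesis by (auto simp: key_def less_prod_def)
next
  case False
  then have "zrank (f x) \<noteq> zrank (f y)" by (simp add: zrank_inj)
  with False show ?thesis by (auto simp: key_def less_prod_def)
qed

lemma key_less_neq: "f x \<noteq> f y \<Longrightarrow> key f x < key f y \<longleftrightarrow> zrank (f x) < zrank (f y)"
  by (simp add: key_less)

lemma key_less_eq: "f x = f y \<Longrightarrow> key f x < key f y \<longleftrightarrow> (0 \<le> f x \<and> x < y \<or> f x < 0 \<and> y < x)"
  by (simp add: key_less)

lemma pp_key: "a < b \<Longrightarrow> prec_plus (f a) (f b) \<longleftrightarrow> key f a < key f b"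
  by (auto simp: key_less prec_plus_def zless_def)

lemma pm_key: "b < a \<Longrightarrow> prec_minus (f a) (f b) \<longleftrightarrow> key f a < key f b"
  by (auto simp: key_less prec_minus_def zless_def)

lemma part_key:
  assumes "\<pi> permutes {1..n}"
  shows "is_pi_partition n \<pi> f \<longleftrightarrow> (\<forall>i. 1 \<le> i \<and> i < n \<longrightarrow> key f (\<pi> i) < key f (\<pi> (i+1)))"
proof -
  have ne: "\<pi> i \<noteq> \<pi> (i+1)" for i
    using permutes_inj[OF assms] by (metis inj_eq n_not_Suc_n Suc_eq_plus1)
  show ?thesis
    unfolding is_pi_partition_def
    using ne pp_key pm_key by (metis linorder_neqE_nat)
qed

definition incr :: "nat \<Rightarrow> (nat \<Rightarrow> 'b::linorder) \<Rightarrow> (nat \<Rightarrow> nat) \<Rightarrow> bool" where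
  "incr n K \<pi> \<longleftrightarrow> (\<forall>i j. 1 \<le> i \<longrightarrow> i < j \<longrightarrow> j \<le> n \<longrightarrow> K (\<pi> i) < K (\<pi> j))"

lemma chain_incr:
  "(\<forall>i. 1 \<le> i \<and> i < n \<longrightarrow> K (\<pi> i) < K (\<pi> (i+1))) \<longleftrightarrow> incr n K \<pi>"
proof
  assume H: "\<forall>i. 1 \<le> i \<and> i < n \<longrightarrow> K (\<pi> i) < K (\<pi> (i+1))"
  have "1 \<le> i \<longrightarrow> i < j \<longrightarrow> j \<le> n \<longrightarrow> K (\<pi> i) < K (\<pi> j)" for i j
  proof (induction j)
    case 0 then show ?case by simp
  next
    case (Suc j)
    then show ?case using H
      by (metis Suc_eq_plus1 Suc_le_lessD dual_order.strict_trans less_Suc_eq order.strict_trans2 le_less)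
  qed
  then show "incr n K \<pi>" by (simp add: incr_def)
next
  assume "incr n K \<pi>" then show "\<forall>i. 1 \<le> i \<and> i < n \<longrightarrow> K (\<pi> i) < K (\<pi> (i+1))"
    by (simp add: incr_def)
qed

lemma part_incr:
  assumes "\<pi> permutes {1..n}"
  shows "is_pi_partition n \<pi> f \<longleftrightarrow> incr n (key f) \<pi>"
  using part_key[OF assms] chain_incr by metis

definition rnk :: "nat \<Rightarrow> (nat \<Rightarrow> 'b::linorder) \<Rightarrow> nat \<Rightarrow> nat" where
  "rnk n K j = card {j'\<in>{1..n}. K j' \<le> K j}"

lemma rnk_mono_less:
  assumes "K a < K b" "b \<in> {1..n}"
  shows "rnk n K a < rnk n K b"
proof -
  have "{j'\<in>{1..n}. K j' \<le> K a} \<subseteq> {j'\<in>{1..n}. K j' \<le> K b}"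
    using assms by auto
  moreover have "b \<in> {j'\<in>{1..n}. K j' \<le> K b}" "b \<notin> {j'\<in>{1..n}. K j' \<le> K a}"
    using assms by auto
  ultimately have "{j'\<in>{1..n}. K j' \<le> K a} \<subset> {j'\<in>{1..n}. K j' \<le> K b}"
    by blast
  then show ?thesis unfolding rnk_def by (intro psubset_card_mono) auto
qed

lemma rnk_inj:
  assumes "inj_on K {1..n}"
  shows "inj_on (rnk n K) {1..n}"
proof (rule inj_onI)
  fix a b assume ab: "a \<in> {1..n}" "b \<in> {1..n}" "rnk n K a = rnk n K b"
  show "a = b"
  proof (rule ccontr)
    assume "a \<noteq> b"
    then have "K a \<noteq> K b" using assms ab inj_on_eq_iff by metis
    then have "K a < K b \<or> K b < K a" by auto
    then show False using rnk_mono_less ab by (metis less_irrefl)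
  qed
qed

lemma rnk_range:
  assumes "j \<in> {1..n}" shows "rnk n K j \<in> {1..n}"
proof -
  have "j \<in> {j'\<in>{1..n}. K j' \<le> K j}" using assms by auto
  then have "card {j'\<in>{1..n}. K j' \<le> K j} > 0"
    by (intro card_gt_0_iff[THEN iffD2]) auto
  moreover have "card {j'\<in>{1..n}. K j' \<le> K j} \<le> card {1..n}"
    by (rule card_mono) auto
  ultimately show ?thesis unfolding rnk_def by simp
qed

lemma rnk_incr:
  assumes p: "\<pi> permutes {1..n}" and inc: "incr n K \<pi>" and i: "i \<in> {1..n}"
  shows "rnk n K (\<pi> i) = i"
proof -
  have "{j'\<in>{1..n}. K j' \<le> K (\<pi> i)} = \<pi> ` {1..i}"
  proof (intro equalityI subsetI)
    fix x assume x: "x \<in> {j'\<in>{1..n}. K j' \<le> K (\<pi> i)}"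
    then have "x \<in> \<pi> ` {1..n}" using permutes_image[OF p] by auto
    then obtain y where y: "y \<in> {1..n}" "x = \<pi> y" by auto
    have "y \<le> i"
    proof (rule ccontr)
      assume "\<not> y \<le> i"
      then have "K (\<pi> i) < K (\<pi> y)" using inc i y unfolding incr_def by auto
      then show False using x y by auto
    qed
    then show "x \<in> \<pi> ` {1..i}" using y by auto
  next
    fix x assume "x \<in> \<pi> ` {1..i}"
    then obtain y where y: "y \<in> {1..i}" "x = \<pi> y" by auto
    have "K (\<pi> y) \<le> K (\<pi> i)"
      using inc i y unfolding incr_def by (cases "y = i") (auto intro: less_imp_le)
    moreover have "x \<in> {1..n}" using y i permutes_in_image[OF p] by auto
    ultimately show "x \<in> {j'\<in>{1..n}. K j' \<le> K (\<pi> i)}" using y by auto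
  qed
  moreover have "inj_on \<pi> {1..i}" using permutes_inj[OF p] by (meson inj_on_subset subset_UNIV)
  ultimately show ?thesis unfolding rnk_def by (simp add: card_image)
qed

lemma sort_unique:
  assumes "inj_on K {1..n}" "\<pi>1 permutes {1..n}" "\<pi>2 permutes {1..n}"
    "incr n K \<pi>1" "incr n K \<pi>2"
  shows "\<pi>1 = \<pi>2"
proof
  fix i show "\<pi>1 i = \<pi>2 i"
  proof (cases "i \<in> {1..n}")
    case True
    then have "rnk n K (\<pi>1 i) = rnk n K (\<pi>2 i)"
      using rnk_incr[OF assms(2,4) True] rnk_incr[OF assms(3,5) True] by simp
    moreover have "\<pi>1 i \<in> {1..n}" "\<pi>2 i \<in> {1..n}"
      using True permutes_in_image[OF assms(2)] permutes_in_image[OF assms(3)] by auto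
    ultimately show ?thesis using rnk_inj[OF assms(1)] by (simp add: inj_on_eq_iff)
  next
    case False then show ?thesis using permutes_not_in[OF assms(2)] permutes_not_in[OF assms(3)] by simp
  qed
qed

lemma sort_exists:
  assumes inj: "inj_on K {1..n}"
  shows "\<exists>\<pi>. \<pi> permutes {1..n} \<and> incr n K \<pi>"
proof -
  let ?S = "{1..n::nat}"
  let ?r = "rnk n K"
  have ri: "inj_on ?r ?S" by (rule rnk_inj[OF inj])
  have "?r ` ?S \<subseteq> ?S" using rnk_range by blast
  then have "?r ` ?S = ?S" using ri by (simp add: endo_inj_surj)
  then have bij: "bij_betw ?r ?S ?S" using ri by (simp add: bij_betw_def)
  define \<pi> where "\<pi> i = (if i \<in> ?S then the_inv_into ?S ?r i else i)" for i
  have b2: "bij_betw \<pi> ?S ?S"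
  proof -
    have "bij_betw (the_inv_into ?S ?r) ?S ?S" using bij bij_betw_the_inv_into by fastforce
    then show ?thesis by (rule bij_betw_cong[THEN iffD1, rotated]) (simp add: \<pi>_def)
  qed
  have p: "\<pi> permutes ?S"
    using b2 by (intro bij_imp_permutes) (auto simp: \<pi>_def)
  have rp: "?r (\<pi> i) = i" if "i \<in> ?S" for i
    using that bij by (simp add: \<pi>_def f_the_inv_into_f_bij_betw)
  have "incr n K \<pi>"
    unfolding incr_def
  proof (intro allI impI)
    fix i j assume ij: "1 \<le> i" "i < j" "j \<le> n"
    show "K (\<pi> i) < K (\<pi> j)"
    proof (rule ccontr)
      assume "\<not> K (\<pi> i) < K (\<pi> j)"
      then have le: "K (\<pi> j) \<le> K (\<pi> i)" by simp
      have "{j'\<in>?S. K j' \<le> K (\<pi> j)} \<subseteq> {j'\<in>?S. K j' \<le> K (\<pi> i)}" using le by auto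
      then have "?r (\<pi> j) \<le> ?r (\<pi> i)" unfolding rnk_def by (intro card_mono) auto
      then show False using rp ij by simp
    qed
  qed
  then show ?thesis using p by blast
qed

definition Om :: "nat \<Rightarrow> int set \<Rightarrow> (nat \<Rightarrow> nat) \<Rightarrow> nat" where
  "Om n X \<pi> = card {f \<in> {1..n} \<rightarrow>\<^sub>E X. is_pi_partition n \<pi> f}"

definition good_comb :: "int set \<Rightarrow> int set \<Rightarrow> int set \<Rightarrow> (int \<Rightarrow> int \<Rightarrow> int) \<Rightarrow> bool" where
  "good_comb A B C comb \<longleftrightarrow> finite A \<and> finite B \<and> finite C \<and> card C = card A * card B \<and>
    (\<forall>c\<in>B. \<forall>a\<in>A. comb c a \<in> C) \<and>
    (\<forall>c\<in>B. \<forall>a\<in>A. (0 \<le> comb c a \<longleftrightarrow> (0 \<le> c \<longleftrightarrow> 0 \<le> a))) \<and>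
    (\<forall>c\<in>B. \<forall>c'\<in>B. \<forall>a\<in>A. \<forall>a'\<in>A. zrank (comb c a) < zrank (comb c' a') \<longleftrightarrow>
        zrank c < zrank c' \<or> (c = c' \<and> (if 0 \<le> c then zrank a < zrank a' else zrank a' < zrank a)))"

lemma gc_ord:
  assumes "good_comb A B C comb" "c \<in> B" "c' \<in> B" "a \<in> A" "a' \<in> A"
  shows "zrank (comb c a) < zrank (comb c' a') \<longleftrightarrow>
        zrank c < zrank c' \<or> (c = c' \<and> (if 0 \<le> c then zrank a < zrank a' else zrank a' < zrank a))"
  using assms unfolding good_comb_def by blast

lemma gc_sign:
  assumes "good_comb A B C comb" "c \<in> B" "a \<in> A"
  shows "0 \<le> comb c a \<longleftrightarrow> (0 \<le> c \<longleftrightarrow> 0 \<le> a)"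
  using assms unfolding good_comb_def by blast

lemma gc_eq:
  assumes "good_comb A B C comb" "c \<in> B" "c' \<in> B" "a \<in> A" "a' \<in> A"
  shows "comb c a = comb c' a' \<longleftrightarrow> c = c' \<and> a = a'"
proof
  assume eq: "comb c a = comb c' a'"
  have n1: "\<not> zrank (comb c a) < zrank (comb c' a')" and n2: "\<not> zrank (comb c' a') < zrank (comb c a)"
    using eq by auto
  have "zrank c = zrank c'"
    using n1 n2 gc_ord[OF assms] gc_ord[OF assms(1,3,2,5,4)] by linarith
  then have cc: "c = c'" by (simp add: zrank_inj)
  have "zrank a = zrank a'"
    using n1 n2 gc_ord[OF assms] gc_ord[OF assms(1,3,2,5,4)] cc by (auto split: if_splits)
  then show "c = c' \<and> a = a'" using cc by (simp add: zrank_inj)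
qed simp

lemma order_lemma:
  assumes gc: "good_comb A B C comb"
    and p: "\<pi> permutes {1..n}" and inc: "incr n (key f) \<pi>"
    and fA: "\<forall>j\<in>{1..n}. f j \<in> A" and gB: "\<forall>q\<in>{1..n}. g q \<in> B"
    and h: "\<forall>j\<in>{1..n}. h j = comb (g (inv \<pi> j)) (f j)"
    and j: "j \<in> {1..n}" and j': "j' \<in> {1..n}"
  shows "key h j < key h j' \<longleftrightarrow> key g (inv \<pi> j) < key g (inv \<pi> j')"
proof -
  define q where "q = inv \<pi> j"
  define q' where "q' = inv \<pi> j'"
  have q: "q \<in> {1..n}" "q' \<in> {1..n}"
    unfolding q_def q'_def using j j' permutes_in_image[OF permutes_inv[OF p]] by blast+
  have jq: "\<pi> q = j" "\<pi> q' = j'" unfolding q_def q'_def by (rule permutes_inverses[OF p])+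
  have kmono: "key f (\<pi> a) < key f (\<pi> b)" if "a \<in> {1..n}" "b \<in> {1..n}" "a < b" for a b
    using inc that unfolding incr_def by simp
  have fq: "key f j < key f j' \<longleftrightarrow> q < q'"
  proof (cases q q' rule: linorder_cases)
    case less then show ?thesis using kmono[OF q less] jq by simp
  next
    case equal then show ?thesis using jq by simp
  next
    case greater
    then have "key f j' < key f j" using kmono[OF q(2,1) greater] jq by simp
    then show ?thesis using greater by simp
  qed
  have fq': "key f j' < key f j \<longleftrightarrow> q' < q"
  proof (cases q q' rule: linorder_cases)
    case less
    then have "key f j < key f j'" using kmono[OF q less] jq by simp
    then show ?thesis using less by simp
  next
    case equal then show ?thesis using jq by simp
  next
    case greater
    then show ?thesis using kmono[OF q(2,1) greater] jq by simp
  qed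
  have hj: "h j = comb (g q) (f j)" "h j' = comb (g q') (f j')"
    unfolding q_def q'_def using h j j' by blast+
  have mem: "g q \<in> B" "g q' \<in> B" "f j \<in> A" "f j' \<in> A" using q fA gB j j' by blast+
  note ord = gc_ord[OF gc mem(1,2,3,4)]
  note eq = gc_eq[OF gc mem(1,2,3,4)]
  note sg = gc_sign[OF gc mem(1,3)]
  have lt: "h j < 0 \<longleftrightarrow> \<not> 0 \<le> h j" "g q < 0 \<longleftrightarrow> \<not> 0 \<le> g q" "f j < 0 \<longleftrightarrow> \<not> 0 \<le> f j"
    by auto
  have jlt: "\<not> (j < j' \<and> j' < j)" "\<not> (q < q' \<and> q' < q)" by auto
  have goal: "key h j < key h j' \<longleftrightarrow> key g q < key g q'"
  proof (cases "g q = g q'")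
    case False
    then have hne: "h j \<noteq> h j'" using eq hj by simp
    have "key h j < key h j' \<longleftrightarrow> zrank (h j) < zrank (h j')" using hne by (simp add: key_less_neq)
    also have "\<dots> \<longleftrightarrow> zrank (g q) < zrank (g q')" using ord False hj by simp
    also have "\<dots> \<longleftrightarrow> key g q < key g q'" using False by (simp add: key_less_neq)
    finally show ?thesis .
  next
    case True
    show ?thesis
    proof (cases "f j = f j'")
      case fe: True
      then have he: "h j = h j'" using hj True by simp
      have "key h j < key h j' \<longleftrightarrow> (0 \<le> h j \<and> j < j' \<or> h j < 0 \<and> j' < j)"
        using he by (simp add: key_less_eq)
      moreover have "key g q < key g q' \<longleftrightarrow> (0 \<le> g q \<and> q < q' \<or> g q < 0 \<and> q' < q)"
        using True by (simp add: key_less_eq)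
      moreover have "key f j < key f j' \<longleftrightarrow> (0 \<le> f j \<and> j < j' \<or> f j < 0 \<and> j' < j)"
        using fe by (simp add: key_less_eq)
      moreover have "key f j' < key f j \<longleftrightarrow> (0 \<le> f j \<and> j' < j \<or> f j < 0 \<and> j < j')"
        using fe by (simp add: key_less_eq)
      moreover have "0 \<le> h j \<longleftrightarrow> (0 \<le> g q \<longleftrightarrow> 0 \<le> f j)" using sg hj by simp
      ultimately show ?thesis using fq fq' lt jlt by (smt (verit))
    next
      case fne: False
      then have hne: "h j \<noteq> h j'" using hj eq by simp
      have "key h j < key h j' \<longleftrightarrow> zrank (h j) < zrank (h j')" using hne by (simp add: key_less_neq)
      also have "\<dots> \<longleftrightarrow> (if 0 \<le> g q then zrank (f j) < zrank (f j') else zrank (f j') < zrank (f j))"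
        using ord True hj by simp
      finally have L: "key h j < key h j' \<longleftrightarrow> (if 0 \<le> g q then key f j < key f j' else key f j' < key f j)"
        using fne by (simp add: key_less_neq)
      have "key g q < key g q' \<longleftrightarrow> (0 \<le> g q \<and> q < q' \<or> g q < 0 \<and> q' < q)"
        using True by (simp add: key_less_eq)
      then show ?thesis using L fq fq' lt jlt by (smt (verit))
    qed
  qed
  then show ?thesis by (simp add: q_def q'_def)
qed

lemma main_count:
  assumes gc: "good_comb A B C comb" and sig: "\<sigma> permutes {1..n}"
  shows "(\<Sum>\<pi>\<in>{p. p permutes {1..n}}. \<Sum>\<tau>\<in>{p. p permutes {1..n}}.
            (if \<pi> \<circ> \<tau> = \<sigma> then Om n A \<pi> * Om n B \<tau> else 0)) = Om n C \<sigma>"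
proof -
  let ?S = "{1..n::nat}"
  let ?PS = "{p. p permutes ?S}"
  define Fs where "Fs \<pi> = {f \<in> ?S \<rightarrow>\<^sub>E A. is_pi_partition n \<pi> f}" for \<pi>
  define Gs where "Gs \<pi> = {g \<in> ?S \<rightarrow>\<^sub>E B. is_pi_partition n (inv \<pi> \<circ> \<sigma>) g}" for \<pi>
  define T where "T = (SIGMA \<pi>:?PS. Fs \<pi> \<times> Gs \<pi>)"
  define H where "H = {h \<in> ?S \<rightarrow>\<^sub>E C. is_pi_partition n \<sigma> h}"
  define \<Phi> where "\<Phi> x = (case x of (\<pi>, f, g) \<Rightarrow> (\<lambda>j\<in>?S. comb (g (inv \<pi> j)) (f j)))"
    for x :: "(nat \<Rightarrow> nat) \<times> (nat \<Rightarrow> int) \<times> (nat \<Rightarrow> int)"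
  have finA: "finite A" and finB: "finite B" and finC: "finite C" and cardC: "card C = card A * card B"
    and inC: "\<forall>c\<in>B. \<forall>a\<in>A. comb c a \<in> C"
    using gc unfolding good_comb_def by auto
  have finPS: "finite ?PS" by (rule finite_permutations) simp
  have step1: "(\<Sum>\<pi>\<in>?PS. \<Sum>\<tau>\<in>?PS. (if \<pi> \<circ> \<tau> = \<sigma> then Om n A \<pi> * Om n B \<tau> else 0))
      = (\<Sum>\<pi>\<in>?PS. Om n A \<pi> * Om n B (inv \<pi> \<circ> \<sigma>))"
  proof (rule sum.cong[OF refl])
    fix \<pi> assume "\<pi> \<in> ?PS"
    then have p: "\<pi> permutes ?S" by simp
    have iff: "\<pi> \<circ> \<tau> = \<sigma> \<longleftrightarrow> \<tau> = inv \<pi> \<circ> \<sigma>" for \<tau>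
    proof
      assume "\<pi> \<circ> \<tau> = \<sigma>"
      then have "inv \<pi> \<circ> (\<pi> \<circ> \<tau>) = inv \<pi> \<circ> \<sigma>" by simp
      then show "\<tau> = inv \<pi> \<circ> \<sigma>" by (simp add: comp_assoc[symmetric] permutes_inv_o[OF p])
    next
      assume "\<tau> = inv \<pi> \<circ> \<sigma>"
      then show "\<pi> \<circ> \<tau> = \<sigma>" by (simp add: comp_assoc[symmetric] permutes_inv_o[OF p])
    qed
    have mem: "inv \<pi> \<circ> \<sigma> \<in> ?PS" using permutes_compose[OF sig permutes_inv[OF p]] by simp
    show "(\<Sum>\<tau>\<in>?PS. (if \<pi> \<circ> \<tau> = \<sigma> then Om n A \<pi> * Om n B \<tau> else 0))
        = Om n A \<pi> * Om n B (inv \<pi> \<circ> \<sigma>)"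
      unfolding iff using finPS mem by (simp add: sum.delta')
  qed
  have finFG: "finite (Fs \<pi> \<times> Gs \<pi>)" for \<pi>
  proof (rule finite_cartesian_product)
    have "finite (?S \<rightarrow>\<^sub>E A)" by (rule finite_PiE) (auto simp: finA)
    then show "finite (Fs \<pi>)" unfolding Fs_def by (rule rev_finite_subset) auto
    have "finite (?S \<rightarrow>\<^sub>E B)" by (rule finite_PiE) (auto simp: finB)
    then show "finite (Gs \<pi>)" unfolding Gs_def by (rule rev_finite_subset) auto
  qed
  have step2: "card T = (\<Sum>\<pi>\<in>?PS. Om n A \<pi> * Om n B (inv \<pi> \<circ> \<sigma>))"
    unfolding T_def using finPS finFG
    by (simp add: card_cartesian_product Om_def Fs_def Gs_def)
  have Cimg: "C = (\<lambda>(c, a). comb c a) ` (B \<times> A)"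
  proof -
    have inj: "inj_on (\<lambda>(c, a). comb c a) (B \<times> A)"
      by (rule inj_onI) (auto simp: gc_eq[OF gc])
    have sub: "(\<lambda>(c, a). comb c a) ` (B \<times> A) \<subseteq> C" using inC by auto
    have "card ((\<lambda>(c, a). comb c a) ` (B \<times> A)) = card C"
      using inj cardC by (simp add: card_image card_cartesian_product)
    then show ?thesis using card_subset_eq[OF finC sub] by simp
  qed
  have bij: "bij_betw \<Phi> T H"
  proof (rule bij_betwI')
    fix x y assume x: "x \<in> T" and y: "y \<in> T"
    obtain \<pi> f g where xe: "x = (\<pi>, f, g)" by (cases x) auto
    obtain \<pi>' f' g' where ye: "y = (\<pi>', f', g')" by (cases y) auto
    have p: "\<pi> permutes ?S" and f: "f \<in> ?S \<rightarrow>\<^sub>E A" and pf: "is_pi_partition n \<pi> f"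
      and g: "g \<in> ?S \<rightarrow>\<^sub>E B"
      using x by (auto simp: xe T_def Fs_def Gs_def)
    have p': "\<pi>' permutes ?S" and f': "f' \<in> ?S \<rightarrow>\<^sub>E A" and pf': "is_pi_partition n \<pi>' f'"
      and g': "g' \<in> ?S \<rightarrow>\<^sub>E B"
      using y by (auto simp: ye T_def Fs_def Gs_def)
    show "(\<Phi> x = \<Phi> y) = (x = y)"
    proof
      assume eq: "\<Phi> x = \<Phi> y"
      have ev: "comb (g (inv \<pi> j)) (f j) = comb (g' (inv \<pi>' j)) (f' j)" if j: "j \<in> ?S" for j
        using fun_cong[OF eq, of j] j by (simp add: \<Phi>_def xe ye)
      have memb: "inv \<pi> j \<in> ?S" "inv \<pi>' j \<in> ?S" if "j \<in> ?S" for j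
        using that permutes_in_image[OF permutes_inv[OF p]] permutes_in_image[OF permutes_inv[OF p']]
        by auto
      have both: "g (inv \<pi> j) = g' (inv \<pi>' j) \<and> f j = f' j" if j: "j \<in> ?S" for j
      proof -
        have m: "g (inv \<pi> j) \<in> B" "g' (inv \<pi>' j) \<in> B" "f j \<in> A" "f' j \<in> A"
          using PiE_mem[OF g memb(1)[OF j]] PiE_mem[OF g' memb(2)[OF j]] PiE_mem[OF f j] PiE_mem[OF f' j]
          by auto
        show ?thesis using ev[OF j] gc_eq[OF gc m] by simp
      qed
      have ff: "f' = f" using PiE_ext[OF f' f] both by simp
      have ik: "inj_on (key f) ?S" using key_inj by (meson inj_onI)
      have i1: "incr n (key f) \<pi>" using pf part_incr[OF p] by simp
      have i2: "incr n (key f) \<pi>'" using pf' ff part_incr[OF p'] by simp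
      have pp: "\<pi>' = \<pi>" by (rule sort_unique[OF ik p' p i2 i1])
      have gg: "g' = g"
      proof (rule PiE_ext[OF g' g])
        fix q assume q: "q \<in> ?S"
        then have "\<pi> q \<in> ?S" using permutes_in_image[OF p] by simp
        then show "g' q = g q" using both[of "\<pi> q"] pp permutes_inverses[OF p] by simp
      qed
      show "x = y" using ff pp gg xe ye by simp
    qed simp
  next
    fix x assume x: "x \<in> T"
    obtain \<pi> f g where xe: "x = (\<pi>, f, g)" by (cases x) auto
    have p: "\<pi> permutes ?S" and f: "f \<in> ?S \<rightarrow>\<^sub>E A" and pf: "is_pi_partition n \<pi> f"
      and g: "g \<in> ?S \<rightarrow>\<^sub>E B" and pg: "is_pi_partition n (inv \<pi> \<circ> \<sigma>) g"
      using x by (auto simp: xe T_def Fs_def Gs_def)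
    define h where "h = \<Phi> x"
    have hv: "\<forall>j\<in>?S. h j = comb (g (inv \<pi> j)) (f j)" by (simp add: h_def \<Phi>_def xe)
    have memb: "inv \<pi> j \<in> ?S" if "j \<in> ?S" for j
      using that permutes_in_image[OF permutes_inv[OF p]] by auto
    have hC: "h \<in> ?S \<rightarrow>\<^sub>E C"
      using inC memb f g by (auto simp: h_def \<Phi>_def xe PiE_iff)
    have p2: "inv \<pi> \<circ> \<sigma> permutes ?S" by (rule permutes_compose[OF sig permutes_inv[OF p]])
    have ig: "incr n (key g) (inv \<pi> \<circ> \<sigma>)" using pg part_incr[OF p2] by simp
    have "incr n (key h) \<sigma>"
      unfolding incr_def
    proof (intro allI impI)
      fix i i' assume ii: "1 \<le> i" "i < i'" "i' \<le> n"
      have si: "\<sigma> i \<in> ?S" "\<sigma> i' \<in> ?S" using ii permutes_in_image[OF sig] by auto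
      have "key g (inv \<pi> (\<sigma> i)) < key g (inv \<pi> (\<sigma> i'))" using ig ii unfolding incr_def by auto
      moreover have fA: "\<forall>j\<in>?S. f j \<in> A" using f by (blast intro: PiE_mem)
      moreover have gB: "\<forall>j\<in>?S. g j \<in> B" using g by (blast intro: PiE_mem)
      ultimately show "key h (\<sigma> i) < key h (\<sigma> i')"
        using order_lemma[OF gc p pf[unfolded part_incr[OF p]] fA gB hv si] by blast
    qed
    then have "is_pi_partition n \<sigma> h" using part_incr[OF sig] by simp
    then show "\<Phi> x \<in> H" using hC by (simp add: H_def h_def)
  next
    fix h assume hH: "h \<in> H"
    then have hC: "h \<in> ?S \<rightarrow>\<^sub>E C" and ph: "is_pi_partition n \<sigma> h" by (auto simp: H_def)
    define dec where "dec x = inv_into (B \<times> A) (\<lambda>(c, a). comb c a) x" for x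
    have decp: "dec x \<in> B \<times> A \<and> comb (fst (dec x)) (snd (dec x)) = x" if "x \<in> C" for x
    proof -
      have "x \<in> (\<lambda>(c, a). comb c a) ` (B \<times> A)" using that Cimg by simp
      then have "dec x \<in> B \<times> A" "(\<lambda>(c, a). comb c a) (dec x) = x"
        unfolding dec_def by (rule inv_into_into, rule f_inv_into_f)
      then show ?thesis by (simp add: case_prod_beta)
    qed
    define fa where "fa j = (if j \<in> ?S then snd (dec (h j)) else undefined)" for j
    define gg where "gg j = fst (dec (h j))" for j
    have fa: "fa \<in> ?S \<rightarrow>\<^sub>E A"
    proof (rule PiE_I)
      fix j assume j: "j \<in> ?S"
      then have "h j \<in> C" using hC by (blast intro: PiE_mem)
      then show "fa j \<in> A" using decp j by (auto simp: fa_def mem_Times_iff)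
    next
      fix j assume "j \<notin> ?S" then show "fa j = undefined" by (simp only: fa_def if_False)
    qed
    have ggB: "gg j \<in> B" and fgh: "comb (gg j) (fa j) = h j" if "j \<in> ?S" for j
    proof -
      have "h j \<in> C" using hC that by (blast intro: PiE_mem)
      then have "dec (h j) \<in> B \<times> A" "comb (fst (dec (h j))) (snd (dec (h j))) = h j"
        using decp by auto
      then show "gg j \<in> B" "comb (gg j) (fa j) = h j" using that by (auto simp: fa_def gg_def)
    qed
    have "inj_on (key fa) ?S" using key_inj by (meson inj_onI)
    then obtain \<pi> where p: "\<pi> permutes ?S" and ip: "incr n (key fa) \<pi>" using sort_exists by blast
    define g where "g q = (if q \<in> ?S then gg (\<pi> q) else undefined)" for q
    have piS: "\<pi> q \<in> ?S" if "q \<in> ?S" for q using that permutes_in_image[OF p] by simp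
    have memb: "inv \<pi> j \<in> ?S" if "j \<in> ?S" for j
      using that permutes_in_image[OF permutes_inv[OF p]] by auto
    have g: "g \<in> ?S \<rightarrow>\<^sub>E B"
      by (rule PiE_I) (use ggB piS in \<open>auto simp: g_def\<close>)
    have hv: "\<forall>j\<in>?S. h j = comb (g (inv \<pi> j)) (fa j)"
      using memb fgh permutes_inverses[OF p] by (simp add: g_def)
    have p2: "inv \<pi> \<circ> \<sigma> permutes ?S" by (rule permutes_compose[OF sig permutes_inv[OF p]])
    have ih: "incr n (key h) \<sigma>" using ph part_incr[OF sig] by simp
    have "incr n (key g) (inv \<pi> \<circ> \<sigma>)"
      unfolding incr_def
    proof (intro allI impI)
      fix i i' assume ii: "1 \<le> i" "i < i'" "i' \<le> n"
      have si: "\<sigma> i \<in> ?S" "\<sigma> i' \<in> ?S" using ii permutes_in_image[OF sig] by auto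
      have "key h (\<sigma> i) < key h (\<sigma> i')" using ih ii unfolding incr_def by auto
      moreover have fA: "\<forall>j\<in>?S. fa j \<in> A" using fa by (blast intro: PiE_mem)
      moreover have gB: "\<forall>j\<in>?S. g j \<in> B" using g by (blast intro: PiE_mem)
      ultimately show "key g ((inv \<pi> \<circ> \<sigma>) i) < key g ((inv \<pi> \<circ> \<sigma>) i')"
        using order_lemma[OF gc p ip fA gB hv si] by simp
    qed
    then have pg: "is_pi_partition n (inv \<pi> \<circ> \<sigma>) g" using part_incr[OF p2] by simp
    have pf: "is_pi_partition n \<pi> fa" using ip part_incr[OF p] by simp
    have xT: "(\<pi>, fa, g) \<in> T" using p fa pf g pg by (simp add: T_def Fs_def Gs_def)
    have "\<Phi> (\<pi>, fa, g) = h"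
    proof (rule PiE_ext[OF _ hC])
      show "\<Phi> (\<pi>, fa, g) \<in> ?S \<rightarrow>\<^sub>E C" using hv hC by (auto simp: \<Phi>_def PiE_iff)
    next
      fix j assume "j \<in> ?S" then show "\<Phi> (\<pi>, fa, g) j = h j" using hv by (simp add: \<Phi>_def)
    qed
    then show "\<exists>x\<in>T. h = \<Phi> x" using xT by (intro bexI[of _ "(\<pi>, fa, g)"]) auto
  qed
  have "card T = card H" using bij by (rule bij_betw_same_card)
  then show ?thesis using step1 step2 by (simp add: Om_def H_def)
qed

lemma gmult_generic:
  fixes a b c :: "(nat \<Rightarrow> nat) \<Rightarrow> rat"
  assumes gc: "good_comb A B C comb"
    and a: "\<And>\<pi>. a \<pi> = (if \<pi> permutes {1..n} then of_nat (Om n A \<pi>) / dA else 0)"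
    and b: "\<And>\<pi>. b \<pi> = (if \<pi> permutes {1..n} then of_nat (Om n B \<pi>) / dB else 0)"
    and c: "\<And>\<pi>. c \<pi> = (if \<pi> permutes {1..n} then of_nat (Om n C \<pi>) / dC else 0)"
    and d: "dC = dA * dB"
  shows "gmult n a b = c"
proof
  fix \<sigma>
  let ?PS = "{p. p permutes {1..n}}"
  show "gmult n a b \<sigma> = c \<sigma>"
  proof (cases "\<sigma> permutes {1..n}")
    case True
    have "gmult n a b \<sigma> = (\<Sum>\<pi>\<in>?PS. \<Sum>\<tau>\<in>?PS.
        of_nat (if \<pi> \<circ> \<tau> = \<sigma> then Om n A \<pi> * Om n B \<tau> else 0) / (dA * dB))"
      unfolding gmult_def by (intro sum.cong refl) (auto simp: a b)
    also have "\<dots> = of_nat (\<Sum>\<pi>\<in>?PS. \<Sum>\<tau>\<in>?PS.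
        (if \<pi> \<circ> \<tau> = \<sigma> then Om n A \<pi> * Om n B \<tau> else 0)) / (dA * dB)"
      by (simp add: sum_divide_distrib)
    also have "\<dots> = of_nat (Om n C \<sigma>) / dC"
      using main_count[OF gc True] d by simp
    finally show ?thesis using True c by simp
  next
    case False
    have "\<pi> \<circ> \<tau> \<noteq> \<sigma>" if "\<pi> \<in> ?PS" "\<tau> \<in> ?PS" for \<pi> \<tau>
      using permutes_compose[of \<tau> "{1..n}" \<pi>] that False by auto
    then have "gmult n a b \<sigma> = 0" unfolding gmult_def by (intro sum.neutral ballI) auto
    then show ?thesis using False c by simp
  qed
qed

lemma lex_lt:
  fixes s s' t t' W :: int
  assumes "0 \<le> t" "t < W" "0 \<le> t'" "t' < W"
  shows "s * W + t < s' * W + t' \<longleftrightarrow> s < s' \<or> (s = s' \<and> t < t')"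
proof (cases s s' rule: linorder_cases)
  case less
  then have "(s + 1) * W \<le> s' * W" using assms by (intro mult_right_mono) auto
  then show ?thesis using assms less by (simp add: algebra_simps)
next
  case equal then show ?thesis by simp
next
  case greater
  then have "(s' + 1) * W \<le> s * W" using assms by (intro mult_right_mono) auto
  then show ?thesis using assms greater by (simp add: algebra_simps)
qed

lemma card_sym: "card {- int m..int m} = 2 * m + 1"
  by simp

definition comb_lazy :: "nat \<Rightarrow> int \<Rightarrow> int \<Rightarrow> int" where
  "comb_lazy k c a = zunrank (zrank c * (2 * int k + 1) +
     (if odd (zrank c) then 2 * int k - zrank a else zrank a))"

lemma gc_lazy:
  "good_comb {- int k..int k} {- int l..int l} {- int (2*k*l+k+l)..int (2*k*l+k+l)} (comb_lazy k)"
proof -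
  let ?A = "{- int k..int k}" and ?B = "{- int l..int l}" and ?C = "{- int (2*k*l+k+l)..int (2*k*l+k+l)}"
  define W where "W = 2 * int k + 1"
  define tt where "tt c a = (if odd (zrank c) then 2 * int k - zrank a else zrank a)" for c a
  have ra: "0 \<le> zrank a \<and> zrank a \<le> 2 * int k" if "a \<in> ?A" for a
    using that zrank_range[of a k] zrank_nonneg[of a] by simp
  have rc: "0 \<le> zrank c \<and> zrank c \<le> 2 * int l" if "c \<in> ?B" for c
    using that zrank_range[of c l] zrank_nonneg[of c] by simp
  have tr: "0 \<le> tt c a \<and> tt c a < W" if "a \<in> ?A" for c a
    using ra[OF that] by (auto simp: tt_def W_def)
  have nn: "0 \<le> zrank c * W + tt c a" if "a \<in> ?A" for c a
    using tr[OF that] zrank_nonneg[of c] by (simp add: W_def)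
  have cl: "comb_lazy k c a = zunrank (zrank c * W + tt c a)" for c a
    by (simp add: comb_lazy_def W_def tt_def)
  have zr: "zrank (comb_lazy k c a) = zrank c * W + tt c a" if "a \<in> ?A" for c a
    using zrank_zunrank[OF nn[OF that]] cl by simp
  have fin: "finite ?A" "finite ?B" "finite ?C" by simp_all
  have card: "card ?C = card ?A * card ?B"
  proof -
    have "card ?C = 2*(2*k*l+k+l)+1" "card ?A = 2*k+1" "card ?B = 2*l+1" by (rule card_sym)+
    then show ?thesis by (simp add: algebra_simps)
  qed
  have inC: "comb_lazy k c a \<in> ?C" if "c \<in> ?B" "a \<in> ?A" for c a
  proof -
    have "zrank c * W \<le> (2 * int l) * W" using rc[OF that(1)] by (intro mult_right_mono) (auto simp: W_def)
    then have "zrank (comb_lazy k c a) \<le> 2 * int l * W + 2 * int k"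
      using zr[OF that(2)] ra[OF that(2)] by (auto simp: tt_def)
    also have "\<dots> = 2 * int (2*k*l+k+l)" by (simp add: W_def algebra_simps)
    finally show ?thesis using zrank_range by blast
  qed
  have sign: "0 \<le> comb_lazy k c a \<longleftrightarrow> (0 \<le> c \<longleftrightarrow> 0 \<le> a)" if "a \<in> ?A" for c a
  proof -
    have "0 \<le> comb_lazy k c a \<longleftrightarrow> even (zrank c * W + tt c a)"
      using even_zrank[of "comb_lazy k c a"] zr[OF that] by simp
    also have "\<dots> \<longleftrightarrow> (even (zrank c) \<longleftrightarrow> even (zrank a))"
      by (auto simp: W_def tt_def)
    finally show ?thesis by (simp add: even_zrank)
  qed
  have ord: "zrank (comb_lazy k c a) < zrank (comb_lazy k c' a') \<longleftrightarrow>
        zrank c < zrank c' \<or> (c = c' \<and> (if 0 \<le> c then zrank a < zrank a' else zrank a' < zrank a))"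
    if "a \<in> ?A" "a' \<in> ?A" for c c' a a'
  proof -
    have "zrank (comb_lazy k c a) < zrank (comb_lazy k c' a') \<longleftrightarrow>
          zrank c < zrank c' \<or> (zrank c = zrank c' \<and> tt c a < tt c' a')"
      using zr[OF that(1)] zr[OF that(2)] lex_lt tr[OF that(1)] tr[OF that(2)] by simp
    then show ?thesis by (auto simp: zrank_inj tt_def even_zrank[symmetric])
  qed
  show ?thesis unfolding good_comb_def using fin card inC sign ord by blast
qed

lemma card_sym_star: "card ({- int m..int m} - {0}) = 2 * m"
proof -
  have "card ({- int m..int m} - {0}) = card {- int m..int m} - 1"
    by (rule card_Diff_singleton) simp
  then show ?thesis by (simp add: card_sym)
qed

definition comb_star :: "nat \<Rightarrow> int \<Rightarrow> int \<Rightarrow> int" where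
  "comb_star k c a = zunrank ((zrank c - 1) * (2 * int k) +
     (if odd (zrank c) then 2 * int k + 1 - zrank a else zrank a))"

lemma gc_star:
  "good_comb ({- int k..int k} - {0}) ({- int l..int l} - {0}) ({- int (2*k*l)..int (2*k*l)} - {0}) (comb_star k)"
proof -
  let ?A = "{- int k..int k} - {0}" and ?B = "{- int l..int l} - {0}" and ?C = "{- int (2*k*l)..int (2*k*l)} - {0}"
  define W where "W = 2 * int k"
  define tt where "tt c a = (if odd (zrank c) then 2 * int k + 1 - zrank a else zrank a) - 1" for c a
  have ra: "1 \<le> zrank a \<and> zrank a \<le> 2 * int k" if "a \<in> ?A" for a
    using that zrank_range_star[of a k] by simp
  have rc: "1 \<le> zrank c \<and> zrank c \<le> 2 * int l" if "c \<in> ?B" for c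
    using that zrank_range_star[of c l] by simp
  have tr: "0 \<le> tt c a \<and> tt c a < W" if "a \<in> ?A" for c a
    using ra[OF that] by (auto simp: tt_def W_def)
  have nn: "0 \<le> (zrank c - 1) * W + tt c a + 1" if "c \<in> ?B" "a \<in> ?A" for c a
    using tr[OF that(2)] rc[OF that(1)] by (simp add: W_def)
  have cl: "comb_star k c a = zunrank ((zrank c - 1) * W + tt c a + 1)" for c a
    by (simp add: comb_star_def W_def tt_def)
  have zr: "zrank (comb_star k c a) = (zrank c - 1) * W + tt c a + 1" if "c \<in> ?B" "a \<in> ?A" for c a
    using zrank_zunrank[OF nn[OF that]] cl by simp
  have fin: "finite ?A" "finite ?B" "finite ?C" by simp_all
  have card: "card ?C = card ?A * card ?B"
    by (simp only: card_sym_star)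
  have inC: "comb_star k c a \<in> ?C" if "c \<in> ?B" "a \<in> ?A" for c a
  proof -
    have "(zrank c - 1) * W \<le> (2 * int l - 1) * W" using rc[OF that(1)]
      by (intro mult_right_mono) (auto simp: W_def)
    then have "zrank (comb_star k c a) \<le> (2 * int l - 1) * W + W"
      using zr[OF that] tr[OF that(2), of c] by linarith
    also have "\<dots> = 2 * int (2*k*l)" by (simp add: W_def algebra_simps)
    finally have "zrank (comb_star k c a) \<le> 2 * int (2*k*l)" .
    moreover have "1 \<le> zrank (comb_star k c a)"
    proof -
      have "0 \<le> (zrank c - 1) * W" using rc[OF that(1)] by (simp add: W_def)
      then show ?thesis using zr[OF that] tr[OF that(2), of c] by linarith
    qed
    ultimately show ?thesis using zrank_range_star by blast
  qed
  have sign: "0 \<le> comb_star k c a \<longleftrightarrow> (0 \<le> c \<longleftrightarrow> 0 \<le> a)" if "c \<in> ?B" "a \<in> ?A" for c a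
  proof -
    have "0 \<le> comb_star k c a \<longleftrightarrow> even ((zrank c - 1) * W + tt c a + 1)"
      using even_zrank[of "comb_star k c a"] zr[OF that] by simp
    also have "\<dots> \<longleftrightarrow> (even (zrank c) \<longleftrightarrow> even (zrank a))"
      by (auto simp: W_def tt_def)
    finally show ?thesis by (simp add: even_zrank)
  qed
  have ord: "zrank (comb_star k c a) < zrank (comb_star k c' a') \<longleftrightarrow>
        zrank c < zrank c' \<or> (c = c' \<and> (if 0 \<le> c then zrank a < zrank a' else zrank a' < zrank a))"
    if "c \<in> ?B" "c' \<in> ?B" "a \<in> ?A" "a' \<in> ?A" for c c' a a'
  proof -
    have "zrank (comb_star k c a) < zrank (comb_star k c' a') \<longleftrightarrow>
          (zrank c - 1) * W + tt c a < (zrank c' - 1) * W + tt c' a'"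
      using zr[OF that(1,3)] zr[OF that(2,4)] by linarith
    also have "\<dots> \<longleftrightarrow> zrank c - 1 < zrank c' - 1 \<or> (zrank c - 1 = zrank c' - 1 \<and> tt c a < tt c' a')"
      using lex_lt tr[OF that(3)] tr[OF that(4)] by simp
    finally show ?thesis by (auto simp: zrank_inj tt_def even_zrank[symmetric])
  qed
  show ?thesis unfolding good_comb_def using fin card inC sign ord by blast
qed

definition comb_plus :: "nat \<Rightarrow> int \<Rightarrow> int \<Rightarrow> int" where
  "comb_plus k c a = (c - 1) * int k + a"

lemma zrank_pos: "0 \<le> x \<Longrightarrow> zrank x = 2 * x"
  by (simp add: zrank_def)

lemma gc_plus:
  "good_comb {1..int k} {1..int l} {1..int (k*l)} (comb_plus k)"
proof -
  let ?A = "{1..int k}" and ?B = "{1..int l}" and ?C = "{1..int (k*l)}"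
  have fin: "finite ?A" "finite ?B" "finite ?C" by simp_all
  have card: "card ?C = card ?A * card ?B" by (simp del: of_nat_mult add: nat_int)
  have inC: "comb_plus k c a \<in> ?C" if "c \<in> ?B" "a \<in> ?A" for c a
  proof -
    have "(c - 1) * int k \<le> (int l - 1) * int k" using that by (intro mult_right_mono) auto
    then have "comb_plus k c a \<le> (int l - 1) * int k + int k"
    proof -
      have "a \<le> int k" using that by simp
      then show ?thesis unfolding comb_plus_def using \<open>(c - 1) * int k \<le> (int l - 1) * int k\<close> by linarith
    qed
    also have "\<dots> = int (k*l)" by (simp add: algebra_simps)
    finally have "comb_plus k c a \<le> int (k*l)" .
    moreover have "1 \<le> comb_plus k c a"
    proof -
      have "0 \<le> (c - 1) * int k" "1 \<le> a" using that by simp_all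
      then show ?thesis unfolding comb_plus_def by linarith
    qed
    ultimately show ?thesis by simp
  qed
  have sign: "0 \<le> comb_plus k c a \<longleftrightarrow> (0 \<le> c \<longleftrightarrow> 0 \<le> a)" if "c \<in> ?B" "a \<in> ?A" for c a
    using that by (simp add: comb_plus_def)
  have ord: "zrank (comb_plus k c a) < zrank (comb_plus k c' a') \<longleftrightarrow>
        zrank c < zrank c' \<or> (c = c' \<and> (if 0 \<le> c then zrank a < zrank a' else zrank a' < zrank a))"
    if "c \<in> ?B" "c' \<in> ?B" "a \<in> ?A" "a' \<in> ?A" for c c' a a'
  proof -
    have "zrank (comb_plus k c a) < zrank (comb_plus k c' a') \<longleftrightarrow>
          (c - 1) * int k + (a - 1) < (c' - 1) * int k + (a' - 1)"
    proof -
      have "0 \<le> (c - 1) * int k" "0 \<le> (c' - 1) * int k" "1 \<le> a" "1 \<le> a'" using that by simp_all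
      then have "0 \<le> comb_plus k c a" "0 \<le> comb_plus k c' a'" unfolding comb_plus_def by linarith+
      then show ?thesis by (simp add: zrank_pos comb_plus_def) linarith
    qed
    also have "\<dots> \<longleftrightarrow> c - 1 < c' - 1 \<or> (c - 1 = c' - 1 \<and> a - 1 < a' - 1)"
      by (rule lex_lt) (use that in auto)
    finally show ?thesis using that by (auto simp: zrank_pos)
  qed
  show ?thesis unfolding good_comb_def using fin card inC sign ord by blast
qed

theorem corollary3p7:
  fixes n :: nat
  assumes "n \<ge> 1"
  shows "(\<forall>k l :: nat. gmult n (phi n k) (phi n l) = phi n (2*k*l + k + l))
       \<and> (\<forall>k l :: nat. k \<ge> 1 \<longrightarrow> l \<ge> 1 \<longrightarrow> gmult n (phi_star n k) (phi_star n l) = phi_star n (2*k*l))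
       \<and> (\<forall>k l :: nat. k \<ge> 1 \<longrightarrow> l \<ge> 1 \<longrightarrow> gmult n (phi_plus n k) (phi_plus n l) = phi_plus n (k*l))"
proof (intro conjI allI impI)
  fix k l :: nat
  have e: "2 * (2*k*l + k + l) + 1 = (2*k+1) * (2*l+1)" by (simp add: algebra_simps)
  show "gmult n (phi n k) (phi n l) = phi n (2*k*l + k + l)"
  proof (rule gmult_generic[OF gc_lazy[of k l]])
    show "\<And>\<pi>. phi n k \<pi> = (if \<pi> permutes {1..n} then of_nat (Om n {- int k..int k} \<pi>) / of_nat ((2*k+1)^n) else 0)"
      by (simp add: phi_def Omega_def Om_def)
    show "\<And>\<pi>. phi n l \<pi> = (if \<pi> permutes {1..n} then of_nat (Om n {- int l..int l} \<pi>) / of_nat ((2*l+1)^n) else 0)"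
      by (simp add: phi_def Omega_def Om_def)
    show "\<And>\<pi>. phi n (2*k*l + k + l) \<pi> = (if \<pi> permutes {1..n} then of_nat (Om n {- int (2*k*l + k + l)..int (2*k*l + k + l)} \<pi>) / of_nat ((2*(2*k*l + k + l)+1)^n) else 0)"
      by (simp only: phi_def Omega_def Om_def)
    show "(of_nat ((2*(2*k*l + k + l)+1)^n) :: rat) = of_nat ((2*k+1)^n) * of_nat ((2*l+1)^n)"
      by (simp only: e power_mult_distrib of_nat_mult)
  qed
next
  fix k l :: nat
  have e: "2 * (2*k*l) = (2*k) * (2*l)" by (simp add: algebra_simps)
  show "gmult n (phi_star n k) (phi_star n l) = phi_star n (2*k*l)"
  proof (rule gmult_generic[OF gc_star[of k l]])
    show "\<And>\<pi>. phi_star n k \<pi> = (if \<pi> permutes {1..n} then of_nat (Om n ({- int k..int k} - {0}) \<pi>) / of_nat ((2*k)^n) else 0)"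
      by (simp only: phi_star_def Omega_star_def Om_def)
    show "\<And>\<pi>. phi_star n l \<pi> = (if \<pi> permutes {1..n} then of_nat (Om n ({- int l..int l} - {0}) \<pi>) / of_nat ((2*l)^n) else 0)"
      by (simp only: phi_star_def Omega_star_def Om_def)
    show "\<And>\<pi>. phi_star n (2*k*l) \<pi> = (if \<pi> permutes {1..n} then of_nat (Om n ({- int (2*k*l)..int (2*k*l)} - {0}) \<pi>) / of_nat ((2*(2*k*l))^n) else 0)"
      by (simp only: phi_star_def Omega_star_def Om_def)
    show "(of_nat ((2*(2*k*l))^n) :: rat) = of_nat ((2*k)^n) * of_nat ((2*l)^n)"
      by (simp only: e power_mult_distrib of_nat_mult)
  qed
next
  fix k l :: nat
  show "gmult n (phi_plus n k) (phi_plus n l) = phi_plus n (k*l)"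
  proof (rule gmult_generic[OF gc_plus[of k l]])
    show "\<And>\<pi>. phi_plus n k \<pi> = (if \<pi> permutes {1..n} then of_nat (Om n {1..int k} \<pi>) / of_nat (k^n) else 0)"
      by (simp only: phi_plus_def Omega_plus_def Om_def)
    show "\<And>\<pi>. phi_plus n l \<pi> = (if \<pi> permutes {1..n} then of_nat (Om n {1..int l} \<pi>) / of_nat (l^n) else 0)"
      by (simp only: phi_plus_def Omega_plus_def Om_def)
    show "\<And>\<pi>. phi_plus n (k*l) \<pi> = (if \<pi> permutes {1..n} then of_nat (Om n {1..int (k*l)} \<pi>) / of_nat ((k*l)^n) else 0)"
      by (simp only: phi_plus_def Omega_plus_def Om_def)
    show "(of_nat ((k*l)^n) :: rat) = of_nat (k^n) * of_nat (l^n)"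
      by (simp add: power_mult_distrib)
  qed
qed

end
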